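(* Let $A\in\mathbb{R}^{M\times M}$ be symmetric positive definite with eigenvalues $0<\phi_1\le\phi_2\le\cdots\le\phi_M$. Let $b,k_{n_1},k_{n_2},k_{n_3}>0$ with $k_{n_2}<k_{n_1}/\sqrt{\phi_M}$, and define $$Q=\mathrm{sym}\left\{\begin{pmatrix}k_{n_1}A+k_{n_3}I&k_{n_2}A&0\\k_{n_2}A&k_{n_1}I&0\\0&0&I\end{pmatrix}\begin{pmatrix}0&I&0\\-A&-bI&bI\\0&0&-A\end{pmatrix}\right\},$$ where $\mathrm{sym}\{X\}=\frac12(X+X^T)$ and $I=I_M$. If moreover $$b<\phi_1,\quad k_{n_1}<\frac{2\phi_1}{b},\quad k_{n_2}<\min\Big\{\frac{bk_{n_1}}{\phi_M(2+b)},\ \frac2b-\frac{k_{n_1}}{\phi_1}\Big\},\quad k_{n_3}<\frac{bk_{n_2}\phi_1}{2},$$ then all $3M$ eigenvalues of $Q$ are negative, and each is bounded above by the maximum of the following negative quantities: $$k_{n_2}\phi_1(b-\phi_1),\qquad k_{n_2}\phi_M\Big(1+\frac b2\Big)-\frac{bk_{n_1}}2,\qquad \phi_1\Big(\frac{bk_{n_2}}2-1\Big)+\frac{bk_{n_1}}2.$$ *)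

theory Defs
  imports "HOL-Analysis.Analysis"
begin

definition mat_eigenvalue :: "real^'n^'n \<Rightarrow> real \<Rightarrow> bool" where
  "mat_eigenvalue X l \<longleftrightarrow> (\<exists>v. v \<noteq> 0 \<and> X *v v = l *\<^sub>R v)"

definition msym :: "real^'n^'n \<Rightarrow> real^'n^'n" where
  "msym X = (1/2) *\<^sub>R (X + transpose X)"

text \<open>3x3 block matrix with M x M blocks; the index type 'm + 'm + 'm
  lists the three block rows/columns in order (Inl, Inr o Inl, Inr o Inr).\<close>
definition block3 ::
  "real^'m^'m \<Rightarrow> real^'m^'m \<Rightarrow> real^'m^'m \<Rightarrow>
   real^'m^'m \<Rightarrow> real^'m^'m \<Rightarrow> real^'m^'m \<Rightarrow>
   real^'m^'m \<Rightarrow> real^'m^'m \<Rightarrow> real^'m^'m \<Rightarrow>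
   real^('m + 'm + 'm)^('m + 'm + 'm)" where
  "block3 B11 B12 B13 B21 B22 B23 B31 B32 B33 =
    (\<chi> i j. (case i of
        Inl i' \<Rightarrow> (case j of Inl j' \<Rightarrow> B11$i'$j' | Inr (Inl j') \<Rightarrow> B12$i'$j' | Inr (Inr j') \<Rightarrow> B13$i'$j')
      | Inr (Inl i') \<Rightarrow> (case j of Inl j' \<Rightarrow> B21$i'$j' | Inr (Inl j') \<Rightarrow> B22$i'$j' | Inr (Inr j') \<Rightarrow> B23$i'$j')
      | Inr (Inr i') \<Rightarrow> (case j of Inl j' \<Rightarrow> B31$i'$j' | Inr (Inl j') \<Rightarrow> B32$i'$j' | Inr (Inr j') \<Rightarrow> B33$i'$j')))"

end

theory Submission
  imports Defs
begin

lemma sym_inner: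
  fixes A :: "real^'n^'n"
  assumes "transpose A = A"
  shows "u \<bullet> (A *v w) = (A *v u) \<bullet> w"
  by (metis assms dot_lmul_matrix vector_transpose_matrix)

lemma min_eig:
  fixes A :: "real^'n^'n"
  assumes symA: "transpose A = A"
  shows "\<exists>\<mu>. mat_eigenvalue A \<mu> \<and> (\<forall>x. \<mu> * (x \<bullet> x) \<le> x \<bullet> (A *v x))"
proof -
  let ?f = "\<lambda>x. x \<bullet> (A *v x)"
  have cont: "continuous_on (sphere (0::real^'n) 1) ?f"
    by (rule continuous_on_inner[OF continuous_on_id matrix_vector_mult_linear_continuous_on])
  have ne: "sphere (0::real^'n) 1 \<noteq> {}"
    by (metis empty_iff mem_sphere_0 norm_axis_1)
  obtain u where u: "u \<in> sphere 0 1" and umin: "\<And>x. x \<in> sphere 0 1 \<Longrightarrow> ?f u \<le> ?f x"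
    using continuous_attains_inf[OF compact_sphere ne cont] by blast
  define \<mu> where "\<mu> = ?f u"
  have uu: "u \<bullet> u = 1" using u by (simp add: dot_square_norm)
  have bound: "\<mu> * (x \<bullet> x) \<le> ?f x" for x
  proof (cases "x = 0")
    case True then show ?thesis by simp
  next
    case False
    define y where "y = (1 / norm x) *\<^sub>R x"
    have "y \<in> sphere 0 1" using False by (simp add: y_def)
    then have "\<mu> \<le> ?f y" using umin \<mu>_def by blast
    moreover have "?f y = ?f x / (norm x)^2"
      by (simp add: y_def matrix_vector_mult_scaleR power2_eq_square)
    moreover have "x \<bullet> x = (norm x)^2" by (simp add: power2_norm_eq_inner)
    ultimately show ?thesis using False
      by (simp add: divide_simps)
  qed
  define B where "B = A - \<mu> *\<^sub>R mat 1"
  have Bv: "B *v w = A *v w - \<mu> *\<^sub>R w" for w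
    by (simp add: B_def matrix_vector_mult_diff_rdistrib scaleR_matrix_vector_assoc[symmetric])
  have Bpos: "w \<bullet> (B *v w) \<ge> 0" for w
    using bound[of w] by (simp add: Bv inner_diff_right)
  have Bsym: "p \<bullet> (B *v q) = (B *v p) \<bullet> q" for p q
    using sym_inner[OF symA, of p q] by (simp add: Bv inner_diff_right inner_diff_left inner_commute)
  have Bu0: "u \<bullet> (B *v u) = 0"
    by (simp add: Bv inner_diff_right uu \<mu>_def)
  define w where "w = B *v u"
  define c where "c = w \<bullet> w"
  define d where "d = w \<bullet> (B *v w)"
  have d0: "d \<ge> 0" using Bpos d_def by simp
  have quad: "2 * t * c + t^2 * d \<ge> 0" for t
  proof -
    have "0 \<le> (u + t *\<^sub>R w) \<bullet> (B *v (u + t *\<^sub>R w))" by (rule Bpos)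
    also have "\<dots> = u \<bullet> (B *v u) + t * (u \<bullet> (B *v w)) + t * (w \<bullet> (B *v u)) + t^2 * d"
      by (simp add: matrix_vector_right_distrib matrix_vector_mult_scaleR inner_add_left inner_add_right d_def power2_eq_square algebra_simps)
    also have "u \<bullet> (B *v w) = c" using Bsym[of u w] by (simp add: c_def w_def inner_commute)
    also have "w \<bullet> (B *v u) = c" by (simp add: c_def w_def)
    finally show ?thesis using Bu0 by (simp add: mult.commute mult.left_commute)
  qed
  have "c = 0"
  proof (rule ccontr)
    assume "c \<noteq> 0"
    then have cp: "c > 0" using c_def by simp
    define t where "t = - c / (d+1)"
    have "2 * t * c + t^2 * d \<ge> 0" by (rule quad)
    moreover have e: "t * (d+1) = - c" using d0 by (simp add: t_def)
    moreover have "(d+1)^2 * (2*t*c + t^2*d) = 2*(t*(d+1))*c*(d+1) + (t*(d+1))^2*d"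
      by (simp add: power2_eq_square algebra_simps)
    moreover have "c * c * (d+2) > 0" using cp d0 by simp
    ultimately have "(d+1)^2 * (2*t*c + t^2*d) < 0"
      by (simp add: power2_eq_square algebra_simps)
    moreover have "(d+1)^2 * (2*t*c + t^2*d) \<ge> 0" using quad[of t] by simp
    ultimately show False by linarith
  qed
  then have "w = 0" by (simp add: c_def)
  then have "A *v u = \<mu> *\<^sub>R u" using Bv[of u] w_def by simp
  moreover have "u \<noteq> 0" using u by auto
  ultimately have "mat_eigenvalue A \<mu>" unfolding mat_eigenvalue_def by blast
  then show ?thesis using bound by blast
qed

definition join3 :: "real^'m \<Rightarrow> real^'m \<Rightarrow> real^'m \<Rightarrow> real^('m+'m+'m)" where
  "join3 x y z = (\<chi> i. case i of Inl a \<Rightarrow> x$a | Inr (Inl a) \<Rightarrow> y$a | Inr (Inr a) \<Rightarrow> z$a)"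

lemma join3_surj:
  "v = join3 (\<chi> a. v$Inl a) (\<chi> a. v$Inr (Inl a)) (\<chi> a. v$Inr (Inr a))"
  by (auto simp: join3_def vec_eq_iff split: sum.split)

lemma sum_Plus3:
  fixes f :: "'m::finite + 'm + 'm \<Rightarrow> real"
  shows "(\<Sum>i\<in>UNIV. f i) = (\<Sum>a\<in>UNIV. f (Inl a)) + (\<Sum>a\<in>UNIV. f (Inr (Inl a))) + (\<Sum>a\<in>UNIV. f (Inr (Inr a)))"
proof -
  have "(\<Sum>i\<in>UNIV. f i) = (\<Sum>i\<in>UNIV <+> UNIV. f i)" by simp
  also have "\<dots> = (\<Sum>a\<in>UNIV. f (Inl a)) + (\<Sum>b\<in>(UNIV::('m+'m) set). f (Inr b))"
    by (subst sum.Plus) (auto simp: o_def)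
  also have "(\<Sum>b\<in>(UNIV::('m+'m) set). f (Inr b)) = (\<Sum>b\<in>UNIV <+> UNIV. f (Inr b))" by simp
  also have "\<dots> = (\<Sum>a\<in>UNIV. f (Inr (Inl a))) + (\<Sum>a\<in>UNIV. f (Inr (Inr a)))"
    by (subst sum.Plus) (auto simp: o_def)
  finally show ?thesis by simp
qed

lemma inner_join3: "join3 x y z \<bullet> join3 x' y' z' = x \<bullet> x' + y \<bullet> y' + z \<bullet> z'"
  by (simp add: inner_vec_def sum_Plus3 join3_def)

lemma block3_mult:
  "block3 B11 B12 B13 B21 B22 B23 B31 B32 B33 *v join3 x y z =
   join3 (B11 *v x + B12 *v y + B13 *v z) (B21 *v x + B22 *v y + B23 *v z) (B31 *v x + B32 *v y + B33 *v z)"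
  by (simp add: vec_eq_iff matrix_vector_mult_def block3_def join3_def sum_Plus3 split: sum.split)

lemma msym_quad: "v \<bullet> (msym X *v v) = v \<bullet> (X *v v)"
proof -
  have "v \<bullet> (transpose X *v v) = v \<bullet> (X *v v)"
    by (metis dot_lmul_matrix inner_commute transpose_matrix_vector)
  then show ?thesis
    by (simp add: msym_def scaleR_matrix_vector_assoc[symmetric] matrix_vector_mult_add_rdistrib inner_add_right)
qed

lemma scal_id: "(c *\<^sub>R mat 1) *v (x::real^'m) = c *\<^sub>R x"
  by (metis matrix_vector_mul_lid scaleR_matrix_vector_assoc)

lemma neg_mv: "(- A) *v (x::real^'m) = - (A *v x)"
  by (metis scaleR_matrix_vector_assoc scaleR_minus1_left)

lemma quad_expr:
  fixes A :: "real^'m^'m"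
  assumes symA: "transpose A = A"
  shows "join3 x y z \<bullet> (msym
      (block3 (kn1 *\<^sub>R A + kn3 *\<^sub>R mat 1) (kn2 *\<^sub>R A) 0
              (kn2 *\<^sub>R A) (kn1 *\<^sub>R mat 1) 0
              0 0 (mat 1)
       ** block3 0 (mat 1) 0
              (- A) (- b *\<^sub>R mat 1) (b *\<^sub>R mat 1)
              0 0 (- A)) *v join3 x y z)
    = - kn2 * ((A *v x) \<bullet> (A *v x)) - b * kn2 * (x \<bullet> (A *v y)) + kn3 * (x \<bullet> y)
      + b * kn2 * (x \<bullet> (A *v z)) + kn2 * (y \<bullet> (A *v y)) - b * kn1 * (y \<bullet> y)
      + b * kn1 * (y \<bullet> z) - z \<bullet> (A *v z)"
proof -
  have s1: "y \<bullet> (A *v x) = x \<bullet> (A *v y)" 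
    using sym_inner[OF symA, of y x] by (simp add: inner_commute)
  have s2: "x \<bullet> (A *v (A *v x)) = (A *v x) \<bullet> (A *v x)" 
    using sym_inner[OF symA, of x "A *v x"] by simp
  show ?thesis
    unfolding msym_quad matrix_vector_mul_assoc[symmetric] block3_mult
    by (simp add: inner_join3 scal_id neg_mv matrix_vector_mult_add_rdistrib matrix_vector_right_distrib
       matrix_vector_mult_scaleR scaleR_matrix_vector_assoc[symmetric] inner_add_right inner_diff_right s1 s2 algebra_simps)
qed

lemma combine:
  fixes q xAy xy xAz yAy yy yz zAz xAx xx zz b kn1 kn2 kn3 phi1 phiM m1 :: real
  assumes c1: "- b * kn2 * xAy + kn3 * xy \<le> (b * kn2 * xAx - kn3 * xx + b * kn2 * yAy - kn3 * yy) / 2"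
    and c2: "b * kn2 * xAz \<le> b * kn2 / 2 * (xAx + zAz)"
    and c3: "b * kn1 * yz \<le> b * kn1 / 2 * (yy + zz)"
    and dx: "- kn2 * q + b * kn2 * xAx \<le> m1 * xx"
    and dy: "kn2 * (1 + b/2) * yAy \<le> kn2 * (1 + b/2) * (phiM * yy)"
    and dz: "(b * kn2 / 2 - 1) * zAz \<le> (b * kn2 / 2 - 1) * (phi1 * zz)"
    and k: "0 \<le> kn3 * yy" "0 \<le> kn3 * xx"
  shows "- kn2 * q - b * kn2 * xAy + kn3 * xy
      + b * kn2 * xAz + kn2 * yAy - b * kn1 * yy
      + b * kn1 * yz - zAz \<le> m1 * xx + (kn2 * phiM * (1 + b / 2) - b * kn1 / 2) * yy + (phi1 * (b * kn2 / 2 - 1) + b * kn1 / 2) * zz"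
proof -
  have e: "m1 * xx + (kn2 * phiM * (1 + b / 2) - b * kn1 / 2) * yy + (phi1 * (b * kn2 / 2 - 1) + b * kn1 / 2) * zz
     - (- kn2 * q - b * kn2 * xAy + kn3 * xy + b * kn2 * xAz + kn2 * yAy - b * kn1 * yy + b * kn1 * yz - zAz)
     = ((b * kn2 * xAx - kn3 * xx + b * kn2 * yAy - kn3 * yy) / 2 - (- b * kn2 * xAy + kn3 * xy))
     + (b * kn2 / 2 * (xAx + zAz) - b * kn2 * xAz)
     + (b * kn1 / 2 * (yy + zz) - b * kn1 * yz)
     + (m1 * xx - (- kn2 * q + b * kn2 * xAx))
     + (kn2 * (1 + b/2) * (phiM * yy) - kn2 * (1 + b/2) * yAy)
     + ((b * kn2 / 2 - 1) * (phi1 * zz) - (b * kn2 / 2 - 1) * zAz)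
     + kn3 * yy / 2 + kn3 * xx / 2"
    by (simp add: field_simps)
  show ?thesis using e c1 c2 c3 dx dy dz k by linarith
qed

theorem lemma2:
  fixes A :: "real^'m^'m"
    and phi1 phiM b kn1 kn2 kn3 :: real
  assumes symA: "transpose A = A"
    and pdA: "\<And>x. x \<noteq> 0 \<Longrightarrow> x \<bullet> (A *v x) > 0"
    and phi1_eig: "mat_eigenvalue A phi1"
    and phiM_eig: "mat_eigenvalue A phiM"
    and phi_bounds: "\<And>l. mat_eigenvalue A l \<Longrightarrow> phi1 \<le> l \<and> l \<le> phiM"
    and pos: "b > 0" "kn1 > 0" "kn2 > 0" "kn3 > 0"
    and kn2_sqrt: "kn2 < kn1 / sqrt phiM"
    and b_lt: "b < phi1"
    and kn1_lt: "kn1 < 2 * phi1 / b"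
    and kn2_lt: "kn2 < min (b * kn1 / (phiM * (2 + b))) (2 / b - kn1 / phi1)"
    and kn3_lt: "kn3 < b * kn2 * phi1 / 2"
  defines "Q \<equiv> msym
      (block3 (kn1 *\<^sub>R A + kn3 *\<^sub>R mat 1) (kn2 *\<^sub>R A) 0
              (kn2 *\<^sub>R A) (kn1 *\<^sub>R mat 1) 0
              0 0 (mat 1)
       ** block3 0 (mat 1) 0
              (- A) (- b *\<^sub>R mat 1) (b *\<^sub>R mat 1)
              0 0 (- A))"
  shows "kn2 * phi1 * (b - phi1) < 0
       \<and> kn2 * phiM * (1 + b / 2) - b * kn1 / 2 < 0
       \<and> phi1 * (b * kn2 / 2 - 1) + b * kn1 / 2 < 0
       \<and> (\<forall>l. mat_eigenvalue Q l \<longrightarrow>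
            l < 0 \<and>
            l \<le> max (kn2 * phi1 * (b - phi1))
                   (max (kn2 * phiM * (1 + b / 2) - b * kn1 / 2)
                        (phi1 * (b * kn2 / 2 - 1) + b * kn1 / 2)))"
proof -
  have phiM_ge: "phi1 \<le> phiM" using phi_bounds[OF phiM_eig] by simp
  have phi1_pos: "phi1 > 0" using pos b_lt by linarith
  have phiM_pos: "phiM > 0" using phiM_ge phi1_pos by linarith
  obtain mu where mu: "mat_eigenvalue A mu" "\<And>x. mu * (x \<bullet> x) \<le> x \<bullet> (A *v x)"
    using min_eig[OF symA] by blast
  have ray1: "phi1 * (x \<bullet> x) \<le> x \<bullet> (A *v x)" for x
  proof -
    have "phi1 \<le> mu" using phi_bounds[OF mu(1)] by simp
    then have "phi1 * (x \<bullet> x) \<le> mu * (x \<bullet> x)" by (simp add: mult_right_mono)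
    then show ?thesis using mu(2)[of x] by linarith
  qed
  have symA': "transpose (- A) = - A" by (metis scaleR_minus1_left symA transpose_scalar)
  obtain nu where nu: "mat_eigenvalue (- A) nu" "\<And>x. nu * (x \<bullet> x) \<le> x \<bullet> ((- A) *v x)"
    using min_eig[OF symA'] by blast
  have "mat_eigenvalue A (- nu)"
  proof -
    obtain w where w: "w \<noteq> 0" "(- A) *v w = nu *\<^sub>R w" using nu(1) unfolding mat_eigenvalue_def by blast
    have "A *v w = - ((- A) *v w)" by (simp add: neg_mv)
    then have "A *v w = (- nu) *\<^sub>R w" using w(2) by simp
    then show ?thesis using w(1) unfolding mat_eigenvalue_def by blast
  qed
  then have nuM: "- nu \<le> phiM" using phi_bounds by blast
  have rayM: "x \<bullet> (A *v x) \<le> phiM * (x \<bullet> x)" for x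
  proof -
    have "(- nu) * (x \<bullet> x) \<le> phiM * (x \<bullet> x)" using nuM inner_ge_zero[of x] by (rule mult_right_mono)
    then show ?thesis using nu(2)[of x] by (simp add: neg_mv)
  qed
  have sy: "p \<bullet> (A *v q) = q \<bullet> (A *v p)" for p q
    by (metis inner_commute sym_inner[OF symA])
  have qexp: "(p + s *\<^sub>R q) \<bullet> (A *v (p + s *\<^sub>R q)) = p \<bullet> (A *v p) + 2 * s * (p \<bullet> (A *v q)) + s^2 * (q \<bullet> (A *v q))" for p q s
    using sy[of q p] by (simp add: matrix_vector_right_distrib matrix_vector_mult_scaleR inner_add_left inner_add_right power2_eq_square algebra_simps)
  have psd: "0 \<le> p \<bullet> (A *v p)" for p
  proof -
    have "0 \<le> phi1 * (p \<bullet> p)" using phi1_pos by simp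
    then show ?thesis using ray1[of p] by linarith
  qed
  let ?m1 = "kn2 * phi1 * (b - phi1)"
  let ?m2 = "kn2 * phiM * (1 + b / 2) - b * kn1 / 2"
  let ?m3 = "phi1 * (b * kn2 / 2 - 1) + b * kn1 / 2"
  have n1: "?m1 < 0" using pos phi1_pos b_lt by (simp add: mult_pos_neg)
  have n2: "?m2 < 0"
  proof -
    have "kn2 < b * kn1 / (phiM * (2 + b))" using kn2_lt by simp
    then have "kn2 * (phiM * (2 + b)) < b * kn1" using phiM_pos pos by (simp add: pos_less_divide_eq)
    then show ?thesis by (simp add: algebra_simps)
  qed
  have n3: "?m3 < 0"
  proof -
    have "kn2 < 2 / b - kn1 / phi1" using kn2_lt by simp
    then have "kn2 * (b * phi1) < (2 / b - kn1 / phi1) * (b * phi1)" using pos phi1_pos by simp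
    also have "\<dots> = 2 * phi1 - kn1 * b" using pos phi1_pos by (simp add: field_simps)
    finally show ?thesis by (simp add: algebra_simps)
  qed
  have bk2neg: "b * kn2 / 2 - 1 < 0"
  proof -
    have "b * kn1 / 2 > 0" using pos by simp
    then have "phi1 * (b * kn2 / 2 - 1) < 0" using n3 by linarith
    then show ?thesis using phi1_pos by (simp add: mult_less_0_iff)
  qed
  define m where "m = max ?m1 (max ?m2 ?m3)"
  have mneg: "m < 0" using n1 n2 n3 by (simp add: m_def)
  have main: "v \<bullet> (Q *v v) \<le> m * (v \<bullet> v)" for v
  proof -
    define x where "x = (\<chi> a. v$Inl a)"
    define y where "y = (\<chi> a. v$Inr (Inl a))"
    define z where "z = (\<chi> a. v$Inr (Inr a))"
    have v: "v = join3 x y z" unfolding x_def y_def z_def by (rule join3_surj)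
    have vv: "v \<bullet> v = x \<bullet> x + y \<bullet> y + z \<bullet> z" using v inner_join3 by metis
    have Qv: "v \<bullet> (Q *v v) = - kn2 * ((A *v x) \<bullet> (A *v x)) - b * kn2 * (x \<bullet> (A *v y)) + kn3 * (x \<bullet> y)
      + b * kn2 * (x \<bullet> (A *v z)) + kn2 * (y \<bullet> (A *v y)) - b * kn1 * (y \<bullet> y)
      + b * kn1 * (y \<bullet> z) - z \<bullet> (A *v z)"
      unfolding Q_def v by (rule quad_expr[OF symA])
    have c1: "- b * kn2 * (x \<bullet> (A *v y)) + kn3 * (x \<bullet> y) \<le>
        (b * kn2 * (x \<bullet> (A *v x)) - kn3 * (x \<bullet> x) + b * kn2 * (y \<bullet> (A *v y)) - kn3 * (y \<bullet> y)) / 2"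
    proof -
      let ?w = "x + 1 *\<^sub>R y"
      have "phi1 * (?w \<bullet> ?w) \<le> ?w \<bullet> (A *v ?w)" by (rule ray1)
      moreover have "kn3 \<le> b * kn2 * phi1"
      proof -
        have "0 < b * kn2 * phi1" using pos phi1_pos by simp
        then show ?thesis using kn3_lt by linarith
      qed
      ultimately have "kn3 * (?w \<bullet> ?w) \<le> b * kn2 * (?w \<bullet> (A *v ?w))"
      proof -
        assume h1: "phi1 * (?w \<bullet> ?w) \<le> ?w \<bullet> (A *v ?w)" and h2: "kn3 \<le> b * kn2 * phi1"
        have "kn3 * (?w \<bullet> ?w) \<le> (b * kn2 * phi1) * (?w \<bullet> ?w)"
          using h2 inner_ge_zero[of ?w] by (rule mult_right_mono)
        also have "\<dots> = (b * kn2) * (phi1 * (?w \<bullet> ?w))" by simp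
        also have "\<dots> \<le> (b * kn2) * (?w \<bullet> (A *v ?w))"
          using h1 pos by (intro mult_left_mono) simp_all
        finally show ?thesis .
      qed
      moreover have "?w \<bullet> ?w = x \<bullet> x + 2 * (x \<bullet> y) + y \<bullet> y"
        by (simp add: inner_add_left inner_add_right inner_commute)
      ultimately show ?thesis unfolding qexp by (simp add: algebra_simps)
    qed
    have c2: "b * kn2 * (x \<bullet> (A *v z)) \<le> b * kn2 / 2 * (x \<bullet> (A *v x) + z \<bullet> (A *v z))"
    proof -
      have "0 \<le> (x + (-1) *\<^sub>R z) \<bullet> (A *v (x + (-1) *\<^sub>R z))" by (rule psd)
      then have "2 * (x \<bullet> (A *v z)) \<le> x \<bullet> (A *v x) + z \<bullet> (A *v z)" unfolding qexp by simp
      then have "(b * kn2 / 2) * (2 * (x \<bullet> (A *v z))) \<le> (b * kn2 / 2) * (x \<bullet> (A *v x) + z \<bullet> (A *v z))"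
        using pos by (intro mult_left_mono) simp_all
      then show ?thesis by simp
    qed
    have c3: "b * kn1 * (y \<bullet> z) \<le> b * kn1 / 2 * (y \<bullet> y + z \<bullet> z)"
    proof -
      have "0 \<le> (y - z) \<bullet> (y - z)" by simp
      then have "2 * (y \<bullet> z) \<le> y \<bullet> y + z \<bullet> z" by (simp add: inner_diff_left inner_diff_right inner_commute)
      then have "(b * kn1 / 2) * (2 * (y \<bullet> z)) \<le> (b * kn1 / 2) * (y \<bullet> y + z \<bullet> z)"
        using pos by (intro mult_left_mono) simp_all
      then show ?thesis by simp
    qed
    have dx: "- kn2 * ((A *v x) \<bullet> (A *v x)) + b * kn2 * (x \<bullet> (A *v x)) \<le> ?m1 * (x \<bullet> x)"
    proof -
      define r where "r = A *v x - phi1 *\<^sub>R x"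
      have xr: "0 \<le> x \<bullet> r" using ray1[of x] by (simp add: r_def inner_diff_right)
      have rr: "0 \<le> r \<bullet> r" by simp
      have "0 \<le> (2 * phi1 - b) * (x \<bullet> r)" using xr b_lt pos by simp
      moreover have "(2 * phi1 - b) * (x \<bullet> r) = 2 * phi1 * (x \<bullet> (A *v x)) - 2 * (phi1 * phi1) * (x \<bullet> x) - b * (x \<bullet> (A *v x)) + b * phi1 * (x \<bullet> x)"
        by (simp add: r_def inner_diff_right algebra_simps)
      moreover have "r \<bullet> r = (A *v x) \<bullet> (A *v x) - 2 * phi1 * (x \<bullet> (A *v x)) + (phi1 * phi1) * (x \<bullet> x)"
        by (simp add: r_def inner_diff_left inner_diff_right inner_commute algebra_simps)
      ultimately have "0 \<le> (A *v x) \<bullet> (A *v x) - b * (x \<bullet> (A *v x)) + b * phi1 * (x \<bullet> x) - (phi1 * phi1) * (x \<bullet> x)"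
        using rr by linarith
      then have "0 \<le> kn2 * ((A *v x) \<bullet> (A *v x) - b * (x \<bullet> (A *v x)) + b * phi1 * (x \<bullet> x) - (phi1 * phi1) * (x \<bullet> x))"
        using pos by simp
      moreover have "kn2 * ((A *v x) \<bullet> (A *v x) - b * (x \<bullet> (A *v x)) + b * phi1 * (x \<bullet> x) - (phi1 * phi1) * (x \<bullet> x))
          = kn2 * ((A *v x) \<bullet> (A *v x)) - b * kn2 * (x \<bullet> (A *v x)) + ?m1 * (x \<bullet> x)"
        by (simp add: algebra_simps)
      ultimately show ?thesis by linarith
    qed
    have dy: "kn2 * (1 + b/2) * (y \<bullet> (A *v y)) \<le> kn2 * (1 + b/2) * (phiM * (y \<bullet> y))"
      using rayM[of y] by (rule mult_left_mono) (use pos in simp)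
    have dz: "(b * kn2 / 2 - 1) * (z \<bullet> (A *v z)) \<le> (b * kn2 / 2 - 1) * (phi1 * (z \<bullet> z))"
      using ray1[of z] by (rule mult_left_mono_neg) (use bk2neg in linarith)
    have ex: "?m1 * (x \<bullet> x) \<le> m * (x \<bullet> x)" using inner_ge_zero[of x] by (intro mult_right_mono) (simp_all add: m_def)
    have ey: "?m2 * (y \<bullet> y) \<le> m * (y \<bullet> y)" using inner_ge_zero[of y] by (intro mult_right_mono) (simp_all add: m_def)
    have ez: "?m3 * (z \<bullet> z) \<le> m * (z \<bullet> z)" using inner_ge_zero[of z] by (intro mult_right_mono) (simp_all add: m_def)
    have k3y: "0 \<le> kn3 * (y \<bullet> y)" "0 \<le> kn3 * (x \<bullet> x)" using pos by simp_all
    have "v \<bullet> (Q *v v) \<le> ?m1 * (x \<bullet> x) + ?m2 * (y \<bullet> y) + ?m3 * (z \<bullet> z)"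
      unfolding Qv by (rule combine[OF c1 c2 c3 dx dy dz k3y])
    also have "\<dots> \<le> m * (v \<bullet> v)" unfolding vv using ex ey ez by (simp only: distrib_left)
    finally show ?thesis .
  qed
  have eigs: "l < 0 \<and> l \<le> m" if eig: "mat_eigenvalue Q l" for l
  proof -
    obtain v where v: "v \<noteq> 0" "Q *v v = l *\<^sub>R v" using eig unfolding mat_eigenvalue_def by blast
    have vp: "v \<bullet> v > 0" using v(1) by simp
    have "l * (v \<bullet> v) \<le> m * (v \<bullet> v)" using main[of v] v(2) by simp
    then have "l \<le> m" using vp by simp
    then show ?thesis using mneg by simp
  qed
  have eigs': "\<forall>l. mat_eigenvalue Q l \<longrightarrow> l < 0 \<and> l \<le> max ?m1 (max ?m2 ?m3)"
    using eigs unfolding m_def by blast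
  show ?thesis using n1 n2 n3 eigs' by (intro conjI)
qed

end
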